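(* For every $n\in\mathbb{N}$, $$a_{n,-n}=\frac{n\,a_{1,-1}^{\,n}}{6^{n-1}},\qquad a_{n,n}=\frac{n\,a_{1,1}^{\,n}}{6^{n-1}}.$$ Equivalently, $\sum_{n\ge0}\Theta^na_{n,-n}x^n=1+\dfrac{b_{1,-1}x}{(1-b_{1,-1}x/6)^2}$ with $b_{1,-1}=\Theta a_{1,-1}$.
   Context: Let $\varepsilon\in\{\pm1\}$, $b\in\mathbb{R}\setminus\{0\}$, $a\in\mathbb{C}$, and consider the degenerate third Painlevé equation $u''=\frac{(u')^2}{u}-\frac{u'}{\tau}+\frac1\tau(-8\varepsilon u^2+2ab)+\frac{b^2}{u}$. Put $\theta(\tau)=3^{3/2}(\varepsilon b)^{1/3}\tau^{2/3}$, $\Theta=3^{3/4}(\varepsilon b)^{1/6}$ (so $\theta=\Theta^2\tau^{2/3}$) and $\alpha=2i\sqrt3\,a$. Let $\varkappa\in\mathbb{C}$ with $|\mathrm{Re}\,\varkappa|<1/2$ and $w=\tau^{2\varkappa/3}e^{i\theta(\tau)}$. Consider the (general-solution) asymptotic expansion $$u(\tau)=\frac{\varepsilon(\varepsilon b)^{2/3}}{2}\tau^{1/3}\Big(1+\sum_{k=1}^{\infty}\tau^{-k/3}\sum_{j=-k}^{k}a_{k,j}w^j\Big),\qquad \mathrm{Re}\,\tau\to+\infty,\ |\mathrm{Im}\,\theta(\tau)|<\delta,$$ where $a_{1,0}=0$, $a_{1,1}a_{1,-1}=-\dfrac{i\varkappa}{\sqrt3(\varepsilon b)^{1/3}}$ (equivalently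 $\Theta^2a_{1,1}a_{1,-1}=-3i\varkappa$), and all remaining coefficients $a_{k,j}$ are uniquely determined by $a_{1,1},a_{1,-1},a,b,\varepsilon$ via formal substitution of the expansion into the equation; set $a_{0,0}=1$. *)

theory Defs
  imports Complex_Main
begin

(* Conventions.
   t = tau powr (1/3);  w = tau^(2 kappa/3) * exp(i theta(tau)),  theta = Theta^2 * t^2.
   (eps b)^(1/3) is the real cube root  root 3 (eps*b).
   A "formal series with top exponent N" is  f :: nat => int => complex, standing for
     sum_k sum_j  f k j * t^(N - k) * w^j ,
   where t and w are treated as independent formal variables (formal substitution);
   all series below satisfy  f k j = 0  for |j| > k. *)

definition pIII_C :: "real \<Rightarrow> real \<Rightarrow> complex" where
  "pIII_C eps b = complex_of_real (eps * (root 3 (eps * b))\<^sup>2 / 2)"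

definition pIII_Theta2 :: "real \<Rightarrow> real \<Rightarrow> complex" where
  "pIII_Theta2 eps b = complex_of_real (3 * sqrt 3 * root 3 (eps * b))"

text \<open>The series S = 1 + sum over k of t^(-k) sum_{j=-k..k} a k j w^j (top exponent 0).\<close>
definition ansatz_S :: "(nat \<Rightarrow> int \<Rightarrow> complex) \<Rightarrow> nat \<Rightarrow> int \<Rightarrow> complex" where
  "ansatz_S a k j = (if k = 0 then (if j = 0 then 1 else 0)
                     else if \<bar>j\<bar> \<le> int k then a k j else 0)"

text \<open>Product of formal series (top exponents add); valid for series with f k j = 0 when |j| > k.\<close>
definition fs_mult :: "(nat \<Rightarrow> int \<Rightarrow> complex) \<Rightarrow> (nat \<Rightarrow> int \<Rightarrow> complex) \<Rightarrow> nat \<Rightarrow> int \<Rightarrow> complex" where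
  "fs_mult f g k j = (\<Sum>k1\<le>k. \<Sum>j1\<in>{- int k1..int k1}. f k1 j1 * g (k - k1) (j - j1))"

text \<open>The Euler operator tau d/dtau acting on a series with top exponent N (result has top
  exponent N+2):  tau d/dtau (t^m w^j) = ((m + 2 kappa j)/3 + (2 i/3) Theta^2 j t^2) t^m w^j.\<close>
definition fs_euler :: "complex \<Rightarrow> complex \<Rightarrow> int \<Rightarrow> (nat \<Rightarrow> int \<Rightarrow> complex) \<Rightarrow> nat \<Rightarrow> int \<Rightarrow> complex" where
  "fs_euler Th2 kap N f k j =
     2 * \<i> / 3 * Th2 * of_int j * f k j
     + (if 2 \<le> k then (of_int N - of_nat (k - 2) + 2 * kap * of_int j) / 3 * f (k - 2) j else 0)"

text \<open>Coefficient of t^(6-k) w^j in  u E^2 u - (E u)^2 + tau (8 eps u^3 - 2 a b u - b^2 tau),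
  where E = tau d/dtau, tau = t^3 and u = C t S.  This expression is tau^2 u times
  (u'' - u'^2/u + u'/tau - (-8 eps u^2 + 2 a b)/tau - b^2/u), so its vanishing is the
  degenerate Painleve III equation.\<close>
definition pIII_residual :: "real \<Rightarrow> real \<Rightarrow> complex \<Rightarrow> complex \<Rightarrow> (nat \<Rightarrow> int \<Rightarrow> complex) \<Rightarrow> nat \<Rightarrow> int \<Rightarrow> complex" where
  "pIII_residual eps b aa kap a k j =
     (let Th2 = pIII_Theta2 eps b;
          u = (\<lambda>k j. pIII_C eps b * ansatz_S a k j);
          Eu = fs_euler Th2 kap 1 u;
          EEu = fs_euler Th2 kap 3 Eu
      in fs_mult u EEu k j - fs_mult Eu Eu k j
         + 8 * of_real eps * fs_mult u (fs_mult u u) k j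
         - (if 2 \<le> k then 2 * aa * of_real b * u (k - 2) j else 0)
         - (if k = 0 \<and> j = 0 then of_real (b\<^sup>2) else 0))"

end

theory Submission imports Defs "HOL-Computational_Algebra.Formal_Power_Series"
begin

definition th :: "complex fps \<Rightarrow> complex fps" where
  "th F = Abs_fps (\<lambda>n. of_nat n * fps_nth F n)"

lemma th_nth [simp]: "fps_nth (th F) n = of_nat n * fps_nth F n"
  by (simp add: th_def)

lemma th_add [simp]: "th (F + G) = th F + th G"
  by (rule fps_ext) (simp add: algebra_simps)
lemma th_diff [simp]: "th (F - G) = th F - th G"
  by (rule fps_ext) (simp add: algebra_simps)
lemma th_neg [simp]: "th (- F) = - th F"
  by (rule fps_ext) (simp add: algebra_simps)
lemma th_const [simp]: "th (fps_const c) = 0"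
  by (rule fps_ext) simp
lemma th_one [simp]: "th 1 = 0"
  by (rule fps_ext) simp
lemma th_numeral [simp]: "th (numeral k) = 0"
  by (rule fps_ext) (simp add: fps_numeral_nth)
lemma th_X [simp]: "th fps_X = fps_X"
  by (rule fps_ext) simp

lemma th_mult [simp]: "th (F * G) = th F * G + F * th G"
proof (rule fps_ext)
  fix n
  have "fps_nth (th F * G + F * th G) n = (\<Sum>i=0..n. of_nat i * fps_nth F i * fps_nth G (n - i) + fps_nth F i * (of_nat (n - i) * fps_nth G (n - i)))"
    by (simp only: fps_add_nth fps_mult_nth th_nth sum.distrib)
  also have "\<dots> = (\<Sum>i=0..n. of_nat n * (fps_nth F i * fps_nth G (n - i)))"
  proof (rule sum.cong)
    fix i assume "i \<in> {0..n}"
    then have "(of_nat n :: complex) = of_nat i + of_nat (n - i)" by (simp flip: of_nat_add)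
    then show "of_nat i * fps_nth F i * fps_nth G (n - i) + fps_nth F i * (of_nat (n - i) * fps_nth G (n - i)) = of_nat n * (fps_nth F i * fps_nth G (n - i))"
      by (simp add: algebra_simps)
  qed simp
  also have "\<dots> = fps_nth (th (F * G)) n"
    by (simp add: fps_mult_nth sum_distrib_left)
  finally show "fps_nth (th (F * G)) n = fps_nth (th F * G + F * th G) n" by simp
qed

definition Yf :: "complex \<Rightarrow> complex fps" where
  "Yf c = Abs_fps (\<lambda>m. if m = 0 then 1 else 6 * of_nat m * c ^ m)"

lemma Y_L2:
  "Yf c * ((1 - fps_const c * fps_X) * (1 - fps_const c * fps_X))
   = (1 - fps_const c * fps_X) * (1 - fps_const c * fps_X) + fps_const (6 * c) * fps_X"
proof -
  have e: "(1 - fps_const c * fps_X) * (1 - fps_const c * fps_X)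
       = 1 - fps_const (2*c) * fps_X + fps_const (c^2) * (fps_X * fps_X)"
    by (simp add: algebra_simps power2_eq_square numeral_fps_const flip: fps_const_mult fps_const_add)
  have r: "Yf c * (1 - fps_const (2 * c) * fps_X + fps_const (c\<^sup>2) * (fps_X * fps_X))
          = Yf c - fps_const (2*c) * (fps_X * Yf c) + fps_const (c^2) * (fps_X * (fps_X * Yf c))"
    by (simp add: algebra_simps)
  show ?thesis
    unfolding e r
  proof (rule fps_ext)
    fix n
    show "fps_nth (Yf c - fps_const (2*c) * (fps_X * Yf c) + fps_const (c^2) * (fps_X * (fps_X * Yf c))) n =
         fps_nth (1 - fps_const (2 * c) * fps_X + fps_const (c\<^sup>2) * (fps_X * fps_X) + fps_const (6 * c) * fps_X) n"
        apply (cases n)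
         apply (simp add: Yf_def)
        subgoal for m
          apply (cases m)
           apply (simp add: Yf_def)
          subgoal for k
            by (cases k) (simp_all add: Yf_def algebra_simps power2_eq_square)
          done
        done
  qed
qed

lemma Y_ode:
  "3 * (Yf c * th (th (Yf c)) - th (Yf c) * th (Yf c)) = Yf c * Yf c * Yf c - 1"
proof -
  define Y where "Y = Yf c"
  define L where "L = 1 - fps_const c * fps_X"
  define K where "K = fps_const c"
  define A where "A = L * L + fps_const (6 * c) * fps_X"
  have thL: "th L = - (K * fps_X)" by (simp add: L_def K_def)
  have eA: "Y * (L * L) = A" unfolding Y_def L_def A_def by (rule Y_L2)
  have thA: "th A = 2 * L * th L + fps_const (6 * c) * fps_X"
    by (simp add: A_def algebra_simps)
  have e1: "th Y * (L * L) + Y * (th L * L + L * th L) = th A"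
    using arg_cong[OF eA, of th] by simp
  define B where "B = L * th A - 2 * A * th L"
  have eB: "th Y * (L * L * L) = B"
    unfolding B_def by (subst e1[symmetric], subst eA[symmetric]) (simp add: algebra_simps)
  have e2: "th (th Y) * (L * L * L) + th Y * (th L * L * L + L * th L * L + L * L * th L) = th B"
    using arg_cong[OF eB, of th] by (simp add: algebra_simps)
  define Cc where "Cc = L * th B - 3 * B * th L"
  have eC: "th (th Y) * (L * L * L * L) = Cc"
    unfolding Cc_def by (subst e2[symmetric], subst eB[symmetric]) (simp add: algebra_simps)
  have thK: "th K = 0" by (simp add: K_def)
  have Lx: "L = 1 - K * fps_X" by (simp add: L_def K_def)
  have six: "fps_const (6 * c) = 6 * K" by (simp add: K_def numeral_fps_const flip: fps_const_mult)
  have thB: "th B = L * th (th A) + th L * th A - 2 * th A * th L - 2 * A * th (th L)"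
    by (simp add: B_def algebra_simps)
  have poly: "3 * (A * Cc - B * B) = A * A * A - L * L * L * L * L * L"
    unfolding Cc_def thB unfolding B_def thA thL A_def six
    by (simp add: Lx thK) algebra
  have key: "(L * L * L * L * L * L) * (3 * (Y * th (th Y) - th Y * th Y) - (Y * Y * Y - 1)) = 0"
    using poly eA eB eC by algebra
  have "L \<noteq> 0"
  proof
    assume "L = 0"
    then have "fps_nth L 0 = 0" by simp
    then show False by (simp add: L_def)
  qed
  then have "L * L * L * L * L * L \<noteq> 0" by simp
  with key show ?thesis unfolding Y_def by simp
qed

lemma sum_single:
  assumes "finite S" "x \<in> S" "\<And>y. y \<in> S \<Longrightarrow> y \<noteq> x \<Longrightarrow> f y = 0"
  shows "sum f S = f x"
proof -
  have "sum f S = f x + sum f (S - {x})" using assms by (simp add: sum.remove)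
  also have "sum f (S - {x}) = 0" using assms by (intro sum.neutral) auto
  finally show ?thesis by simp
qed

lemma nth_numeral_mult: "fps_nth (numeral k * F) n = numeral k * fps_nth F n"
  by (simp add: numeral_fps_const)

definition FF :: "complex fps \<Rightarrow> complex fps" where
  "FF Z = 3 * (Z * th (th Z) - th Z * th Z) - Z * Z * Z"

lemma low_mult_right:
  fixes D G :: "complex fps"
  assumes "\<forall>m<n. fps_nth D m = 0"
  shows "fps_nth (G * D) n = fps_nth G 0 * fps_nth D n"
proof -
  have "fps_nth (G * D) n = (\<Sum>i=0..n. fps_nth G i * fps_nth D (n - i))" by (rule fps_mult_nth)
  also have "\<dots> = fps_nth G 0 * fps_nth D (n - 0)"
  proof (rule sum_single)
    fix y assume "y \<in> {0..n}" "y \<noteq> 0"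
    then have "n - y < n" by auto
    then have "fps_nth D (n - y) = 0" using assms by blast
    then show "fps_nth G y * fps_nth D (n - y) = 0" by simp
  qed auto
  finally show ?thesis by simp
qed

lemma low_mult_left:
  fixes D G :: "complex fps"
  assumes "\<forall>m<n. fps_nth D m = 0"
  shows "fps_nth (D * G) n = fps_nth D n * fps_nth G 0"
  using low_mult_right[OF assms, of G] by (simp only: mult.commute)

lemma fps_unique:
  fixes X Y :: "complex fps"
  assumes "fps_nth X 0 = 1" "fps_nth Y 0 = 1" "fps_nth X 1 = fps_nth Y 1"
    and "\<forall>n\<ge>1. fps_nth (FF X) n = 0" "\<forall>n\<ge>1. fps_nth (FF Y) n = 0"
  shows "fps_nth X n = fps_nth Y n"
proof (induction n rule: less_induct)
  case (less n)
  show ?case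
  proof (cases "n \<le> 1")
    case True
    then have "n = 0 \<or> n = 1" by auto
    then show ?thesis using assms by auto
  next
    case False
    define D where "D = X - Y"
    have D0: "\<forall>m<n. fps_nth D m = 0" using less by (simp add: D_def)
    have tD0: "\<forall>m<n. fps_nth (th D) m = 0" using D0 by simp
    have ttD0: "\<forall>m<n. fps_nth (th (th D)) m = 0" using D0 by simp
    have Dz: "fps_nth D 0 = 0" using D0 False by simp
    have XD: "X = Y + D" by (simp add: D_def)
    have diff: "FF X - FF Y = 3 * (Y * th (th D) + D * th (th Y) + D * th (th D) - 2 * (th Y * th D) - th D * th D)
       - (3 * ((Y * Y) * D) + 3 * ((Y * D) * D) + (D * D) * D)"
      unfolding FF_def XD by (simp add: algebra_simps)
    have f1: "fps_nth (Y * th (th D)) n = of_nat n * of_nat n * fps_nth D n"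
      using low_mult_right[OF ttD0, of Y] assms(2) by simp
    have f2: "fps_nth (D * th (th Y)) n = 0"
      using low_mult_left[OF D0, of "th (th Y)"] by simp
    have f3: "fps_nth (D * th (th D)) n = 0"
      using low_mult_left[OF D0, of "th (th D)"] by simp
    have f4: "fps_nth (th Y * th D) n = 0"
      using low_mult_right[OF tD0, of "th Y"] by simp
    have f5: "fps_nth (th D * th D) n = 0"
      using low_mult_right[OF tD0, of "th D"] by simp
    have f6: "fps_nth ((Y * Y) * D) n = fps_nth D n"
      using low_mult_right[OF D0, of "Y * Y"] assms(2) by simp
    have f7: "fps_nth ((Y * D) * D) n = 0"
      using low_mult_right[OF D0, of "Y * D"] Dz by simp
    have f8: "fps_nth ((D * D) * D) n = 0"
      using low_mult_right[OF D0, of "D * D"] Dz by simp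
    have "fps_nth (FF X - FF Y) n = 3 * (of_nat n * of_nat n - 1) * fps_nth D n"
      unfolding diff fps_sub_nth fps_add_nth nth_numeral_mult f1 f2 f3 f4 f5 f6 f7 f8
      by (simp add: algebra_simps)
    moreover have "fps_nth (FF X - FF Y) n = 0" using assms False by simp
    moreover have "(of_nat n * of_nat n - 1 :: complex) \<noteq> 0"
    proof
      assume "(of_nat n * of_nat n - 1 :: complex) = 0"
      then have "(of_nat (n * n) :: complex) = of_nat 1" by simp
      then have "n * n = 1" by (simp only: of_nat_eq_iff)
      then show False using False by (simp add: mult_eq_1_iff)
    qed
    ultimately have "fps_nth D n = 0" by simp
    then show ?thesis by (simp add: D_def)
  qed
qed

definition supp :: "(nat \<Rightarrow> int \<Rightarrow> complex) \<Rightarrow> bool" where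
  "supp f \<longleftrightarrow> (\<forall>k j. int k < \<bar>j\<bar> \<longrightarrow> f k j = 0)"

lemma supp_ansatz: "supp (\<lambda>k j. C * ansatz_S a k j)"
  unfolding supp_def ansatz_S_def by auto

lemma supp_euler: "supp f \<Longrightarrow> supp (fs_euler T kp N f)"
  unfolding supp_def fs_euler_def by auto

lemma supp_mult:
  assumes "supp f" "supp g"
  shows "supp (fs_mult f g)"
  unfolding supp_def
proof (intro allI impI)
  fix k :: nat and j :: int
  assume kj: "int k < \<bar>j\<bar>"
  show "fs_mult f g k j = 0"
    unfolding fs_mult_def
  proof (intro sum.neutral ballI)
    fix k1 j1 assume k1: "k1 \<in> {..k}" and j1: "j1 \<in> {- int k1..int k1}"
    have "int (k - k1) < \<bar>j - j1\<bar>" using k1 j1 kj by auto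
    then have "g (k - k1) (j - j1) = 0" using assms(2) unfolding supp_def by blast
    then show "f k1 j1 * g (k - k1) (j - j1) = 0" by simp
  qed
qed

lemma diag_mult:
  assumes "supp f" "supp g" "s = 1 \<or> s = -1"
  shows "fs_mult f g n (s * int n) = (\<Sum>k1\<le>n. f k1 (s * int k1) * g (n - k1) (s * int (n - k1)))"
  unfolding fs_mult_def
proof (rule sum.cong[OF refl])
  fix k1 assume k1: "k1 \<in> {..n}"
  show "(\<Sum>j1\<in>{- int k1..int k1}. f k1 j1 * g (n - k1) (s * int n - j1)) =
        f k1 (s * int k1) * g (n - k1) (s * int (n - k1))"
  proof -
    have "(\<Sum>j1\<in>{- int k1..int k1}. f k1 j1 * g (n - k1) (s * int n - j1)) =
          f k1 (s * int k1) * g (n - k1) (s * int n - s * int k1)"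
    proof (rule sum_single)
      show "s * int k1 \<in> {- int k1..int k1}" using assms(3) by auto
    next
      fix y assume y: "y \<in> {- int k1..int k1}" "y \<noteq> s * int k1"
      have "int (n - k1) < \<bar>s * int n - y\<bar>" using y k1 assms(3) by auto
      then have "g (n - k1) (s * int n - y) = 0" using assms(2) unfolding supp_def by blast
      then show "f k1 y * g (n - k1) (s * int n - y) = 0" by simp
    qed simp
    also have "s * int n - s * int k1 = s * int (n - k1)" using k1 by (simp add: of_nat_diff algebra_simps)
    finally show ?thesis .
  qed
qed

lemma diag_euler:
  assumes "supp f" "s = 1 \<or> s = -1"
  shows "fs_euler T kp N f k (s * int k) = 2 * \<i> / 3 * T * (of_int s * of_nat k) * f k (s * int k)"
proof -
  have "2 \<le> k \<Longrightarrow> f (k - 2) (s * int k) = 0"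
    using assms unfolding supp_def by auto
  then show ?thesis unfolding fs_euler_def by auto
qed

lemma diag_eq:
  fixes eps b :: real and aa kap :: complex and a :: "nat \<Rightarrow> int \<Rightarrow> complex" and s :: int
  assumes eps: "eps = 1 \<or> eps = -1" and b: "b \<noteq> 0" and s: "s = 1 \<or> s = -1"
    and res: "\<forall>k j. pIII_residual eps b aa kap a k j = 0"
    and n: "n \<ge> 1"
  shows "fps_nth (FF (Abs_fps (\<lambda>k. if k = 0 then 1 else a k (s * int k)))) n = 0"
proof -
  define xs where "xs = (\<lambda>k. if k = 0 then 1 else a k (s * int k))"
  define X where "X = Abs_fps xs"
  define C where "C = pIII_C eps b"
  define T where "T = pIII_Theta2 eps b"
  define c where "c = 2 * \<i> / 3 * T"
  define u where "u = (\<lambda>k j. C * ansatz_S a k j)"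
  define Eu where "Eu = fs_euler T kap 1 u"
  define EEu where "EEu = fs_euler T kap 3 Eu"
  have ss: "of_int s * of_int s = (1::complex)" using s by auto
  have su: "supp u" unfolding u_def by (rule supp_ansatz)
  have sEu: "supp Eu" unfolding Eu_def by (rule supp_euler[OF su])
  have sEEu: "supp EEu" unfolding EEu_def by (rule supp_euler[OF sEu])
  have su2: "supp (fs_mult u u)" by (rule supp_mult[OF su su])
  have du: "u k (s * int k) = C * xs k" for k
    using s unfolding u_def xs_def ansatz_S_def by (auto simp: abs_mult)
  have dEu: "Eu k (s * int k) = c * of_int s * of_nat k * (C * xs k)" for k
    unfolding Eu_def c_def using diag_euler[OF su s] du by simp
  have dEEu: "EEu k (s * int k) = c * c * of_nat k * of_nat k * (C * xs k)" for k
  proof -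
    have "EEu k (s * int k) = c * (of_int s * of_nat k) * Eu k (s * int k)"
      unfolding EEu_def c_def using diag_euler[OF sEu s] by simp
    also have "\<dots> = c * c * (of_int s * of_int s) * of_nat k * of_nat k * (C * xs k)"
      unfolding dEu by (simp add: algebra_simps)
    finally show ?thesis using ss by simp
  qed
  have R1: "fs_mult u EEu n (s * int n) = C^2 * c^2 * fps_nth (X * th (th X)) n"
    unfolding diag_mult[OF su sEEu s] du dEEu X_def fps_mult_nth th_nth fps_nth_Abs_fps atMost_atLeast0
    by (simp add: sum_distrib_left algebra_simps power2_eq_square)
  have R2: "fs_mult Eu Eu n (s * int n) = C^2 * c^2 * fps_nth (th X * th X) n"
  proof -
    have "fs_mult Eu Eu n (s * int n) = (\<Sum>i=0..n. C^2 * c^2 * (of_int s * of_int s) * (of_nat i * xs i * (of_nat (n - i) * xs (n - i))))"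
      unfolding diag_mult[OF sEu sEu s] dEu atMost_atLeast0
      by (simp add: algebra_simps power2_eq_square)
    also have "\<dots> = C^2 * c^2 * fps_nth (th X * th X) n"
      unfolding ss X_def fps_mult_nth th_nth fps_nth_Abs_fps by (simp add: sum_distrib_left)
    finally show ?thesis .
  qed
  have dUU: "fs_mult u u m (s * int m) = C^2 * fps_nth (X * X) m" for m
    unfolding diag_mult[OF su su s] du X_def fps_mult_nth fps_nth_Abs_fps atMost_atLeast0
    by (simp add: sum_distrib_left algebra_simps power2_eq_square)
  have R3: "fs_mult u (fs_mult u u) n (s * int n) = C^3 * fps_nth (X * (X * X)) n"
    unfolding diag_mult[OF su su2 s] du dUU
    unfolding X_def fps_mult_nth[of "Abs_fps xs" "Abs_fps xs * Abs_fps xs"] fps_nth_Abs_fps atMost_atLeast0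
    by (simp add: sum_distrib_left algebra_simps power3_eq_cube power2_eq_square)
  have ex: "(if 2 \<le> n then 2 * aa * of_real b * u (n - 2) (s * int n) else 0) = 0"
    unfolding u_def ansatz_S_def using s by (auto simp: abs_mult)
  have ex2: "(if 2 \<le> n then 2 * aa * of_real b * (C * ansatz_S a (n - 2) (s * int n)) else 0) = 0"
    unfolding ansatz_S_def using s by (auto simp: abs_mult)
  have "pIII_residual eps b aa kap a n (s * int n) = 0" using res by blast
  then have E: "C^2 * c^2 * fps_nth (X * th (th X)) n - C^2 * c^2 * fps_nth (th X * th X) n
      + 8 * of_real eps * (C^3 * fps_nth (X * (X * X)) n) = 0"
    unfolding pIII_residual_def Let_def
    unfolding C_def[symmetric] T_def[symmetric] u_def[symmetric] Eu_def[symmetric] EEu_def[symmetric]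
    using R1 R2 R3 ex ex2 n by simp
  define r where "r = root 3 (eps * b)"
  have r3: "r ^ 3 = eps * b" unfolding r_def by (simp add: odd_real_root_pow)
  have e2: "eps ^ 2 = 1" using eps by auto
  have r6: "r ^ 6 = b ^ 2"
  proof -
    have "r ^ 6 = (r ^ 3) ^ 2" by (simp flip: power_mult)
    also have "\<dots> = eps ^ 2 * b ^ 2" by (simp add: r3 power_mult_distrib)
    finally show ?thesis using e2 by simp
  qed
  have Cr: "C = of_real (eps * r^2 / 2)" unfolding C_def pIII_C_def r_def by simp
  have cc: "c^2 = of_real (- 12 * r^2)"
  proof -
    have "c^2 = (2/3)^2 * \<i>^2 * T^2" unfolding c_def by (simp add: power_mult_distrib power_divide)
    also have "T^2 = of_real ((3 * sqrt 3 * r)^2)" unfolding T_def pIII_Theta2_def r_def by simp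
    also have "(3 * sqrt 3 * r)^2 = 27 * r^2" by (simp add: power_mult_distrib)
    finally show ?thesis by (simp add: power2_eq_square)
  qed
  have K1: "C^2 * c^2 = - 3 * of_real (b^2)"
  proof -
    have "C^2 * c^2 = of_real ((eps * r^2 / 2)^2 * (- 12 * r^2))" unfolding Cr cc by simp
    also have "(eps * r^2 / 2)^2 * (- 12 * r^2) = - 3 * (eps^2 * r^6)"
      by (simp add: power_mult_distrib power_divide algebra_simps flip: power_add power_mult)
    finally show ?thesis using e2 r6 by simp
  qed
  have K2: "8 * of_real eps * C^3 = of_real (b^2)"
  proof -
    have "8 * of_real eps * C^3 = of_real (8 * eps * (eps * r^2 / 2)^3)" unfolding Cr by simp
    also have "8 * eps * (eps * r^2 / 2)^3 = (eps^2)^2 * r^6"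
      by (simp add: power_mult_distrib power_divide algebra_simps eval_nat_numeral)
    finally show ?thesis using e2 r6 by simp
  qed
  have b2: "(of_real (b^2) :: complex) \<noteq> 0" using b by simp
  have FFn: "fps_nth (FF X) n = 3 * (fps_nth (X * th (th X)) n - fps_nth (th X * th X) n) - fps_nth (X * (X * X)) n"
    unfolding FF_def by (simp only: fps_sub_nth nth_numeral_mult mult.assoc)
  have E': "- 3 * of_real (b^2) * (fps_nth (X * th (th X)) n - fps_nth (th X * th X) n) + of_real (b^2) * fps_nth (X * (X * X)) n = 0"
  proof -
    have "- 3 * of_real (b^2) * (fps_nth (X * th (th X)) n - fps_nth (th X * th X) n) + of_real (b^2) * fps_nth (X * (X * X)) n
      = C^2 * c^2 * (fps_nth (X * th (th X)) n - fps_nth (th X * th X) n) + (8 * of_real eps * C^3) * fps_nth (X * (X * X)) n"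
      by (simp only: K1 K2)
    also have "\<dots> = 0" using E by (simp add: algebra_simps)
    finally show ?thesis .
  qed
  have "of_real (b^2) * fps_nth (FF X) n = 0"
    unfolding FFn using E' by (simp add: algebra_simps)
  with b2 show ?thesis unfolding X_def xs_def by simp
qed

lemma FF_Y: "n \<ge> 1 \<Longrightarrow> fps_nth (FF (Yf c)) n = 0"
proof -
  assume n: "n \<ge> 1"
  have "FF (Yf c) = - 1" unfolding FF_def Y_ode by simp
  then show ?thesis using n by simp
qed

lemma diag_closed:
  fixes eps b :: real and aa kap :: complex and a :: "nat \<Rightarrow> int \<Rightarrow> complex" and s :: int
  assumes eps: "eps = 1 \<or> eps = -1" and b: "b \<noteq> 0" and s: "s = 1 \<or> s = -1"
    and res: "\<forall>k j. pIII_residual eps b aa kap a k j = 0"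
    and n: "n \<ge> 1"
  shows "a n (s * int n) = of_nat n * a 1 s ^ n / 6 ^ (n - 1)"
proof -
  define X where "X = Abs_fps (\<lambda>k. if k = 0 then 1 else a k (s * int k))"
  define Y where "Y = Yf (a 1 s / 6)"
  have "fps_nth X n = fps_nth Y n"
  proof (rule fps_unique)
    show "fps_nth X 0 = 1" by (simp add: X_def)
    show "fps_nth Y 0 = 1" by (simp add: Y_def Yf_def)
    show "fps_nth X 1 = fps_nth Y 1" by (simp add: X_def Y_def Yf_def)
    show "\<forall>n\<ge>1. fps_nth (FF X) n = 0" unfolding X_def using diag_eq[OF eps b s res] by blast
    show "\<forall>n\<ge>1. fps_nth (FF Y) n = 0" unfolding Y_def using FF_Y by blast
  qed
  moreover have "fps_nth X n = a n (s * int n)" using n by (simp add: X_def)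
  moreover have "fps_nth Y n = of_nat n * a 1 s ^ n / 6 ^ (n - 1)"
  proof -
    obtain m where m: "n = Suc m" using n by (cases n) auto
    show ?thesis unfolding Y_def Yf_def m by (simp add: power_divide field_simps)
  qed
  ultimately show ?thesis by simp
qed

theorem mainTheorem6:
  fixes eps b :: real and aa kap :: complex and a :: "nat \<Rightarrow> int \<Rightarrow> complex"
  assumes "eps = 1 \<or> eps = -1"
    and "b \<noteq> 0"
    and "\<bar>Re kap\<bar> < 1/2"
    and "a 1 0 = 0"
    and "pIII_Theta2 eps b * a 1 1 * a 1 (-1) = - 3 * \<i> * kap"
    and "\<forall>k j. pIII_residual eps b aa kap a k j = 0"
  shows "\<forall>n::nat. n \<ge> 1 \<longrightarrow>
           a n (- int n) = of_nat n * a 1 (-1) ^ n / 6 ^ (n - 1) \<and>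
           a n (int n) = of_nat n * a 1 1 ^ n / 6 ^ (n - 1)"
proof (intro allI impI conjI)
  fix n :: nat assume n: "n \<ge> 1"
  show "a n (- int n) = of_nat n * a 1 (-1) ^ n / 6 ^ (n - 1)"
    using diag_closed[OF assms(1,2) _ assms(6) n, of "-1"] by simp
  show "a n (int n) = of_nat n * a 1 1 ^ n / 6 ^ (n - 1)"
    using diag_closed[OF assms(1,2) _ assms(6) n, of 1] by simp
qed

end
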